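(* Let buyer types $(\theta,v)$ be distributed with density $f(\theta,v)=\tfrac12$ on the region $\{0\le v-\theta\le 1,\ 0\le\theta\le 2\}$ and $f=0$ elsewhere. Then the pricing scheme $$p(t)=\begin{cases}4/3, & t\in[0,1),\\ 2/3, & t\ge 1\end{cases}$$ is optimal, i.e. it maximizes expected revenue over all non-increasing pricing functions. Its separation function, which is the optimal separation line, is $$\ell_p(\theta)=\begin{cases}2/3+\theta, & 0\le\theta\le 2/3,\\ 4/3, & \theta>2/3.\end{cases}$$
   Context: Model: a seller sells identical items in unlimited supply to unit-demand buyers with types $(\theta,v)$. Here $\theta\ge0$ is the cost per unit time and $v$ the valuation. A pricing scheme is a non-increasing function $p:[0,\infty)\to\mathbb{R}$: spending time $t$ costs price $p(t)$. A buyer of type $(\theta,v)$ chooses $t^*(\theta)$, the smallest minimizer of $p(t)+\theta t$ over $t\ge0$, buys iff $p(t^*(\theta))+\theta t^*(\theta)\le v$, and then pays $p(t^*(\theta))$. The seller maximizes the expected payment. The separation function of $p$ is $\ell_p(\theta)=\min_{t\ge0}\{p(t)+\theta t\}$: a buyer of type $(\theta,v)$ buys iff $v\ge\ell_p(\theta)$, and she then pays $\ell_p(\theta)-\theta\ell_p'(\theta)$. *)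

theory Defs
  imports "HOL-Analysis.Analysis"
begin

text \<open>A pricing scheme: a function non-increasing on the time domain [0,\<infinity>).
  Values at negative arguments are irrelevant (times are restricted to t \<ge> 0).\<close>
definition pricing_scheme :: "(real \<Rightarrow> real) \<Rightarrow> bool" where
  "pricing_scheme p \<longleftrightarrow> (\<forall>s t. 0 \<le> s \<longrightarrow> s \<le> t \<longrightarrow> p t \<le> p s)"

definition least_minimizer :: "(real \<Rightarrow> real) \<Rightarrow> real \<Rightarrow> real \<Rightarrow> bool" where
  "least_minimizer p \<theta> t \<longleftrightarrow> 0 \<le> t \<and> (\<forall>s\<ge>0. p t + \<theta> * t \<le> p s + \<theta> * s)
     \<and> (\<forall>s. 0 \<le> s \<and> s < t \<longrightarrow> p t + \<theta> * t < p s + \<theta> * s)"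

definition well_defined_scheme :: "(real \<Rightarrow> real) \<Rightarrow> bool" where
  "well_defined_scheme p \<longleftrightarrow> (\<forall>\<theta>>0. \<exists>t. least_minimizer p \<theta> t)"

definition tstar :: "(real \<Rightarrow> real) \<Rightarrow> real \<Rightarrow> real" where
  "tstar p \<theta> = (THE t. least_minimizer p \<theta> t)"

text \<open>Payment of a buyer of type (\<theta>, v): she buys iff p(t*) + \<theta> t* \<le> v, and then pays p(t*).
  (If no smallest minimizer exists, she is taken not to buy.)\<close>
definition payment :: "(real \<Rightarrow> real) \<Rightarrow> real \<Rightarrow> real \<Rightarrow> real" where
  "payment p \<theta> v =
     (if (\<exists>t. least_minimizer p \<theta> t) \<and> p (tstar p \<theta>) + \<theta> * tstar p \<theta> \<le> v
      then p (tstar p \<theta>) else 0)"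

definition type_region :: "(real \<times> real) set" where
  "type_region = {(\<theta>, v). 0 \<le> v - \<theta> \<and> v - \<theta> \<le> 1 \<and> 0 \<le> \<theta> \<and> \<theta> \<le> 2}"

definition type_density :: "real \<times> real \<Rightarrow> real" where
  "type_density x = (if x \<in> type_region then 1/2 else 0)"

definition revenue :: "(real \<Rightarrow> real) \<Rightarrow> real" where
  "revenue p = (\<integral>x. type_density x * payment p (fst x) (snd x) \<partial>lborel)"

definition separation :: "(real \<Rightarrow> real) \<Rightarrow> real \<Rightarrow> real" where
  "separation p \<theta> = (INF t\<in>{0..}. p t + \<theta> * t)"

definition p_opt :: "real \<Rightarrow> real" where
  "p_opt t = (if t < 1 then 4/3 else 2/3)"

end

theory Submission
  imports Defs "HOL-Analysis.Analysis"
begin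

lemma deriv_nonpos_right:
  fixes G :: "real \<Rightarrow> real"
  assumes d: "(G has_real_derivative E) (at z)" and zb: "z < b"
    and lt: "\<And>x. z < x \<Longrightarrow> x \<le> b \<Longrightarrow> G x < G z"
  shows "E \<le> 0"
proof -
  have "(G has_real_derivative E) (at z within {z<..})"
    using d has_field_derivative_at_within by blast
  then have "((\<lambda>x. (G x - G z) / (x - z)) \<longlongrightarrow> E) (at_right z)"
    by (simp add: has_field_derivative_iff)
  moreover have "eventually (\<lambda>x. (G x - G z) / (x - z) \<le> 0) (at_right z)"
    unfolding eventually_at_right_field
  proof (intro exI[of _ b] conjI allI impI)
    fix y assume "z < y" "y < b"
    then have "G y - G z < 0" using lt[of y] by auto
    then show "(G y - G z) / (y - z) \<le> 0" using \<open>z < y\<close>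
      by (simp add: divide_nonpos_pos)
  qed (use zb in auto)
  ultimately show ?thesis
    by (rule tendsto_upperbound) simp
qed

lemma ctbl_mono:
  fixes F :: "real \<Rightarrow> real"
  assumes ab: "a \<le> b" and S: "countable S" and cont: "continuous_on {a..b} F"
    and der: "\<And>x. x \<in> {a<..<b} - S \<Longrightarrow> \<exists>D\<ge>0. (F has_real_derivative D) (at x)"
  shows "F a \<le> F b"
proof (rule ccontr)
  assume "\<not> F a \<le> F b"
  then have lt: "F b < F a" by simp
  with ab have ab': "a < b" by (cases "a = b") auto
  define \<delta> where "\<delta> = (F a - F b) / (2 * (b - a))"
  have dpos: "\<delta> > 0" using lt ab' by (simp add: \<delta>_def)
  define G where "G x = F x + \<delta> * (x - a)" for x
  have "\<delta> * (b - a) = (F a - F b) / 2" using ab' by (simp add: \<delta>_def field_simps)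
  then have Gb: "G b < G a" using lt by (simp add: G_def)
  have contG: "continuous_on {a..b} G" unfolding G_def
    by (intro continuous_intros cont)
  define X where "X y = Sup {x\<in>{a..b}. y \<le> G x}" for y
  have props: "X y \<in> {a..<b} \<and> G (X y) = y \<and> (\<forall>x. X y < x \<and> x \<le> b \<longrightarrow> G x < y)"
    if y: "y \<in> {G b<..<G a}" for y
  proof -
    let ?K = "{x\<in>{a..b}. y \<le> G x}"
    have "closed ({a..b} \<inter> G -` {y..})"
      by (rule continuous_closed_preimage[OF contG]) auto
    moreover have "?K = {a..b} \<inter> G -` {y..}" by auto
    ultimately have cl: "closed ?K" by simp
    have ne: "?K \<noteq> {}" using y ab by auto
    have bd: "bdd_above ?K" by (rule bdd_aboveI[of _ b]) auto
    have XK: "X y \<in> ?K" unfolding X_def by (rule closed_contains_Sup[OF ne bd cl])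
    have le: "x \<le> X y" if "x \<in> ?K" for x unfolding X_def by (rule cSup_upper[OF that bd])
    have Xb: "X y \<noteq> b" using XK y by auto
    have after: "G x < y" if "X y < x" "x \<le> b" for x
    proof (rule ccontr)
      assume "\<not> G x < y"
      then have "x \<in> ?K" using that XK by auto
      then show False using le[of x] that by auto
    qed
    have eq: "G (X y) = y"
    proof (rule ccontr)
      assume "G (X y) \<noteq> y"
      then have gt: "G (X y) > y" using XK by auto
      have "X y \<in> {a..b}" using XK by auto
      with contG have "continuous (at (X y) within {a..b}) G"
        by (simp add: continuous_on_eq_continuous_within)
      then obtain d where d: "d > 0" "\<And>x. x \<in> {a..b} \<Longrightarrow> dist x (X y) < d \<Longrightarrow> dist (G x) (G (X y)) < G (X y) - y"
        unfolding continuous_within_eps_delta using gt by (metis diff_gt_0_iff_gt)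
      define x where "x = min b (X y + d / 2)"
      have xin: "x \<in> {a..b}" "X y < x" "dist x (X y) < d"
        using XK Xb d(1) by (auto simp: x_def dist_real_def)
      have "G x < y" using after xin by (auto simp: x_def)
      moreover have "dist (G x) (G (X y)) < G (X y) - y" using d(2) xin by auto
      ultimately show False by (auto simp: dist_real_def)
    qed
    show ?thesis using XK Xb eq after by auto
  qed
  have inj: "inj_on X {G b<..<G a}"
    by (rule inj_onI) (metis props)
  have sub: "X ` {G b<..<G a} \<subseteq> insert a S"
  proof
    fix z assume "z \<in> X ` {G b<..<G a}"
    then obtain y where y: "y \<in> {G b<..<G a}" and z: "z = X y" by auto
    show "z \<in> insert a S"
    proof (rule ccontr)
      assume nz: "z \<notin> insert a S"
      then have "z \<in> {a<..<b} - S" using props[OF y] z by auto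
      then obtain D where D: "D \<ge> 0" "(F has_real_derivative D) (at z)" using der by blast
      then have dG: "(G has_real_derivative D + \<delta>) (at z)" unfolding G_def
        by (auto intro!: derivative_eq_intros)
      have "D + \<delta> \<le> 0"
        by (rule deriv_nonpos_right[OF dG, of b]) (use props[OF y] z in auto)
      then show False using D dpos by simp
    qed
  qed
  have "countable (X ` {G b<..<G a})"
    using countable_subset[OF sub] S by simp
  then have "countable {G b<..<G a}" using countable_image_inj_on inj by blast
  then show False using uncountable_open_interval Gb by blast
qed

definition clip :: "real \<Rightarrow> real" where "clip g = max 0 (min 1 g)"
definition CC :: "real \<Rightarrow> real" where "CC g = (clip g)^2 / 2 + max 0 (g - 1)"

lemma R0: "x \<le> 0 \<Longrightarrow> CC x = 0" "x \<le> 0 \<Longrightarrow> clip x = 0" by (simp_all add: CC_def clip_def)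
lemma R1: "0 \<le> x \<Longrightarrow> x \<le> 1 \<Longrightarrow> CC x = x^2/2" "0 \<le> x \<Longrightarrow> x \<le> 1 \<Longrightarrow> clip x = x" by (simp_all add: CC_def clip_def)
lemma R2: "1 \<le> x \<Longrightarrow> CC x = x - 1/2" "1 \<le> x \<Longrightarrow> clip x = 1" by (simp_all add: CC_def clip_def)

lemma CC_quad: "\<bar>CC x - CC a - clip a * (x - a)\<bar> \<le> (x - a)^2 / 2"
proof -
  consider "x \<le> 0" "a \<le> 0" | "0 \<le> x" "x \<le> 1" "a \<le> 0" | "1 \<le> x" "a \<le> 0"
    | "x \<le> 0" "0 \<le> a" "a \<le> 1" | "0 \<le> x" "x \<le> 1" "0 \<le> a" "a \<le> 1" | "1 \<le> x" "0 \<le> a" "a \<le> 1"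
    | "x \<le> 0" "1 \<le> a" | "0 \<le> x" "x \<le> 1" "1 \<le> a" | "1 \<le> x" "1 \<le> a" by linarith
  then show ?thesis
  proof cases
    case 1 then show ?thesis by (simp add: R0)
  next
    case 2 
    have h: "x^2 \<le> (x-a)^2" by (rule power_mono) (use 2 in auto)
    show ?thesis unfolding R1[OF 2(1,2)] R0[OF 2(3)] using h 2 by (simp add: abs_le_iff)
  next
    case 3
    have "x^2 \<le> (x-a)^2" by (rule power_mono) (use 3 in auto)
    moreover have "0 \<le> (x-1)^2" by simp
    ultimately show ?thesis unfolding R2[OF 3(1)] R0[OF 3(2)] using 3
      by (simp add: power2_eq_square algebra_simps abs_le_iff)
  next
    case 4
    have "0 \<le> (-x) * a" using 4 by (intro mult_nonneg_nonneg) auto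
    moreover have "0 \<le> x^2" by simp_all
    ultimately show ?thesis unfolding R0[OF 4(1)] R1[OF 4(2,3)] using 4
      apply (simp add: power2_eq_square algebra_simps split: abs_split)
      using mult_nonneg_nonneg[of a a] by linarith
  next
    case 5
    have e: "x^2/2 - a^2/2 - a*(x-a) = (x-a)^2/2" by (simp add: power2_eq_square algebra_simps)
    show ?thesis unfolding R1[OF 5(1,2)] R1[OF 5(3,4)] e by simp
  next
    case 6
    have "0 \<le> (1-a) * (2*x-a-1)" using 6 by (intro mult_nonneg_nonneg) auto
    moreover have "0 \<le> (x-1)^2" by simp
    ultimately show ?thesis unfolding R2[OF 6(1)] R1[OF 6(2,3)] using 6
      by (simp add: power2_eq_square algebra_simps abs_le_iff)
  next
    case 7
    have "(1-x)^2 \<le> (a-x)^2" by (rule power_mono) (use 7 in auto)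
    then show ?thesis unfolding R0[OF 7(1)] R2[OF 7(2)] using 7
      apply (simp add: power2_eq_square algebra_simps abs_le_iff)
      using zero_le_square[of x] by linarith
  next
    case 8
    have "(1-x)^2 \<le> (a-x)^2" by (rule power_mono) (use 8 in auto)
    moreover have "0 \<le> (x-1)^2" by simp
    ultimately show ?thesis unfolding R1[OF 8(1,2)] R2[OF 8(3)] using 8
      by (simp add: power2_eq_square algebra_simps abs_le_iff)
  next
    case 9
    then show ?thesis unfolding R2[OF 9(1)] R2[OF 9(2)] 
      apply (simp add: power2_eq_square algebra_simps abs_le_iff)
      using zero_le_square[of "x-a"] by (simp add: algebra_simps)
  qed
qed

definition phi :: "real \<Rightarrow> real" where "phi g = (1 - g) * clip g - CC g"

lemma phi_R0: "g \<le> 0 \<Longrightarrow> phi g = 0" by (simp add: phi_def R0)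
lemma phi_R1: "0 \<le> g \<Longrightarrow> g \<le> 1 \<Longrightarrow> phi g = g - 3/2 * g^2"
  by (simp add: phi_def R1 power2_eq_square algebra_simps)
lemma phi_R2: "1 \<le> g \<Longrightarrow> phi g = 3/2 - 2 * g" by (simp add: phi_def R2 algebra_simps)

lemma phi_le: "phi g \<le> 1/6"
proof -
  consider "g \<le> 0" | "0 \<le> g" "g \<le> 1" | "1 \<le> g" by linarith
  then show ?thesis
  proof cases
    case 2
    have "0 \<le> (3*g - 1)^2" by simp
    then show ?thesis unfolding phi_R1[OF 2] by (simp add: power2_eq_square algebra_simps)
  qed (simp_all add: phi_R0 phi_R2)
qed

lemma phi_le_lin: "phi g \<le> 3/2 - 2 * g"
proof -
  consider "g \<le> 0" | "0 \<le> g" "g \<le> 1" | "1 \<le> g" by linarith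
  then show ?thesis
  proof cases
    case 2
    have "0 \<le> (g - 1)^2" by simp
    then show ?thesis unfolding phi_R1[OF 2] by (simp add: power2_eq_square algebra_simps)
  qed (simp_all add: phi_R0 phi_R2)
qed

lemma phi_tan2: "1 \<le> g0 \<Longrightarrow> g0 + d \<le> g \<Longrightarrow> phi g \<le> 3/2 - 2 * g0 - 2 * d"
  using phi_le_lin[of g] by linarith

lemma phi_tan1:
  assumes g0: "1/3 \<le> g0" "g0 \<le> 1" and gd: "g0 + d \<le> g"
  shows "phi g \<le> g0 - 3/2 * g0^2 + (1 - 3 * g0) * d"
proof -
  have "(1 - 3 * g0) * (g - g0) \<le> (1 - 3 * g0) * d"
    by (rule mult_left_mono_neg) (use g0 gd in auto)
  moreover have "phi g \<le> g0 - 3/2 * g0^2 + (1 - 3 * g0) * (g - g0)"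
  proof -
    consider "g \<le> 0" | "0 \<le> g" "g \<le> 1" | "1 \<le> g" by linarith
    then show ?thesis
    proof cases
      case 1
      have "(1 - 3 * g0) * (g - g0) \<ge> (1 - 3 * g0) * (- g0)"
        by (rule mult_left_mono_neg) (use g0 1 in auto)
      then show ?thesis unfolding phi_R0[OF 1]
        apply (simp add: power2_eq_square algebra_simps)
        using zero_le_square[of g0] by linarith
    next
      case 2
      have "0 \<le> (g - g0)^2" by simp
      then show ?thesis unfolding phi_R1[OF 2] by (simp add: power2_eq_square algebra_simps)
    next
      case 3
      have "0 \<le> (1 - g0) * (2 * g - g0 - 1)" by (rule mult_nonneg_nonneg) (use g0 3 in auto)
      then show ?thesis unfolding phi_R2[OF 3] by (simp add: power2_eq_square algebra_simps)
    qed
  qed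
  ultimately show ?thesis by linarith
qed

lemma deriv_quad:
  fixes f :: "real \<Rightarrow> real"
  assumes K: "K \<ge> 0" and q: "\<And>x. \<bar>f x - f a - D * (x - a)\<bar> \<le> K * (x - a)^2"
  shows "(f has_real_derivative D) (at a)"
  unfolding has_field_derivative_iff LIM_eq
proof (intro allI impI)
  fix r :: real assume r: "r > 0"
  show "\<exists>s>0. \<forall>x. x \<noteq> a \<and> norm (x - a) < s \<longrightarrow> norm ((f x - f a) / (x - a) - D) < r"
  proof (intro exI[of _ "r / (K + 1)"] conjI allI impI)
    show "r / (K + 1) > 0" using r K by simp
    fix x assume x: "x \<noteq> a \<and> norm (x - a) < r / (K + 1)"
    have ne: "x - a \<noteq> 0" using x by simp
    have "(f x - f a) / (x - a) - D = (f x - f a - D * (x - a)) / (x - a)"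
      using ne by (simp add: field_simps)
    then have "norm ((f x - f a) / (x - a) - D) = \<bar>f x - f a - D * (x - a)\<bar> / \<bar>x - a\<bar>"
      by (simp add: abs_divide)
    also have "\<dots> \<le> K * (x - a)^2 / \<bar>x - a\<bar>"
      using q[of x] ne by (simp add: divide_right_mono)
    also have "\<dots> = K * \<bar>x - a\<bar>"
    proof -
      have "(x - a)^2 = \<bar>x - a\<bar> * \<bar>x - a\<bar>" by (simp add: power2_eq_square)
      moreover have "\<bar>x - a\<bar> \<noteq> 0" using ne by simp
      ultimately show ?thesis by (simp only:) (simp add: divide_simps)
    qed
    also have "\<dots> \<le> K * (r / (K + 1))" using x K by (intro mult_left_mono) auto
    also have "\<dots> < r" using r K by (simp add: field_simps)
    finally show "norm ((f x - f a) / (x - a) - D) < r" .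
  qed
qed

lemma CC_deriv: "(CC has_real_derivative clip a) (at a)"
  by (rule deriv_quad[of "1/2"]) (use CC_quad in auto)

lemma L_deriv:
  fixes t L :: "real \<Rightarrow> real"
  assumes sub: "\<And>\<theta> \<theta>'. \<theta> > 0 \<Longrightarrow> \<theta>' > 0 \<Longrightarrow> L \<theta>' \<le> L \<theta> + (\<theta>' - \<theta>) * t \<theta>"
    and x: "x > 0" and ct: "isCont t x"
  shows "(L has_real_derivative t x) (at x)"
  unfolding has_field_derivative_iff LIM_eq
proof (intro allI impI)
  fix r :: real assume r: "r > 0"
  from ct have "t \<midarrow>x\<rightarrow> t x" by (simp add: isCont_def)
  then obtain s1 where s1: "s1 > 0" "\<And>y. y \<noteq> x \<and> norm (y - x) < s1 \<Longrightarrow> norm (t y - t x) < r"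
    unfolding LIM_eq using r by blast
  show "\<exists>s>0. \<forall>y. y \<noteq> x \<and> norm (y - x) < s \<longrightarrow> norm ((L y - L x) / (y - x) - t x) < r"
  proof (intro exI[of _ "min s1 x"] conjI allI impI)
    show "min s1 x > 0" using s1 x by simp
    fix y assume y: "y \<noteq> x \<and> norm (y - x) < min s1 x"
    then have ypos: "y > 0" by auto
    have ne: "y - x \<noteq> 0" using y by simp
    define N where "N = L y - L x - (y - x) * t x"
    have N1: "N \<le> 0" using sub[OF x ypos] by (simp add: N_def)
    have N2: "(y - x) * (t y - t x) \<le> N" using sub[OF ypos x] by (simp add: N_def algebra_simps)
    have "\<bar>N\<bar> \<le> \<bar>y - x\<bar> * \<bar>t y - t x\<bar>"
      using N1 N2 by (simp add: abs_mult[symmetric])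
    have "(L y - L x) / (y - x) - t x = N / (y - x)" using ne by (simp add: N_def field_simps)
    then have "norm ((L y - L x) / (y - x) - t x) = \<bar>N\<bar> / \<bar>y - x\<bar>" by (simp add: abs_divide)
    also have "\<dots> \<le> \<bar>t y - t x\<bar>"
      using \<open>\<bar>N\<bar> \<le> \<bar>y - x\<bar> * \<bar>t y - t x\<bar>\<close> ne by (simp add: divide_le_eq mult.commute)
    also have "\<dots> < r" using s1(2)[of y] y by auto
    finally show "norm ((L y - L x) / (y - x) - t x) < r" .
  qed
qed

lemma clip_cont [continuous_intros]: "continuous_on S g \<Longrightarrow> continuous_on S (\<lambda>x. clip (g x))"
  unfolding clip_def by (intro continuous_intros)
lemma clip_isCont [continuous_intros]: "isCont g x \<Longrightarrow> isCont (\<lambda>x. clip (g x)) x"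
  unfolding clip_def by (intro continuous_intros)
lemma CC_cont [continuous_intros]: "continuous_on S g \<Longrightarrow> continuous_on S (\<lambda>x. CC (g x))"
  unfolding CC_def clip_def by (intro continuous_intros) auto

lemma core:
  fixes t L B b :: "real \<Rightarrow> real" and \<epsilon> :: real
  assumes tpos: "\<And>\<theta>. \<theta> > 0 \<Longrightarrow> t \<theta> \<ge> 0"
    and sub: "\<And>\<theta> \<theta>'. \<theta> > 0 \<Longrightarrow> \<theta>' > 0 \<Longrightarrow> L \<theta>' \<le> L \<theta> + (\<theta>' - \<theta>) * t \<theta>"
    and eps: "0 < \<epsilon>" "\<epsilon> \<le> 2"
    and int: "(\<lambda>\<theta>. (L \<theta> - \<theta> * t \<theta>) * clip (1 + \<theta> - L \<theta>)) integrable_on {\<epsilon>..2}"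
    and Bc: "continuous_on {\<epsilon>..2} B"
    and Z: "finite Z"
    and Bd: "\<And>x. x \<in> {\<epsilon><..<2} - Z \<Longrightarrow> (B has_real_derivative b x) (at x)"
    and bge: "\<And>x. x \<in> {\<epsilon><..<2} \<Longrightarrow> phi (1 + x - L x) \<le> b x"
  shows "integral {\<epsilon>..2} (\<lambda>\<theta>. (L \<theta> - \<theta> * t \<theta>) * clip (1 + \<theta> - L \<theta>))
    \<le> 2 * CC (3 - L 2) - \<epsilon> * CC (1 + \<epsilon> - L \<epsilon>) + B 2 - B \<epsilon>"
proof -
  define f where "f \<theta> = (L \<theta> - \<theta> * t \<theta>) * clip (1 + \<theta> - L \<theta>)" for \<theta>
  have intf: "f integrable_on {\<epsilon>..2}" using int unfolding f_def by simp
  have anti: "t y \<le> t x" if xy: "0 < x" "x \<le> y" for x y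
  proof (cases "x = y")
    case False
    then have yx: "y - x > 0" using xy by simp
    have "(y - x) * t y \<le> (y - x) * t x"
      using sub[of x y] sub[of y x] xy by (simp add: algebra_simps)
    then show ?thesis using yx by simp
  qed simp
  have cnt: "countable {a \<in> {0<..}. \<not> isCont (\<lambda>x. - t x) a}"
    by (rule mono_on_ctble_discont_open) (auto simp: mono_on_def intro: anti)
  define S where "S = {a \<in> {0<..}. \<not> isCont (\<lambda>x. - t x) a} \<union> Z"
  have cS: "countable S" unfolding S_def using cnt Z by (simp add: countable_finite)
  have lip: "dist (L x) (L y) \<le> t \<epsilon> * dist x y" if "x \<in> {\<epsilon>..2}" "y \<in> {\<epsilon>..2}" for x y
  proof -
    have key: "\<bar>L v - L u\<bar> \<le> t \<epsilon> * (v - u)" if uv: "\<epsilon> \<le> u" "u \<le> v" for u v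
    proof -
      have upos: "u > 0" "v > 0" using uv eps by auto
      have "L v - L u \<le> (v - u) * t u" using sub[OF upos] by simp
      also have "\<dots> \<le> (v - u) * t \<epsilon>" using anti[OF eps(1) uv(1)] uv by (intro mult_left_mono) auto
      finally have 1: "L v - L u \<le> t \<epsilon> * (v - u)" by (simp add: mult.commute)
      have "0 \<le> (v - u) * t v" using tpos[OF upos(2)] uv by simp
      also have "\<dots> \<le> L v - L u" using sub[OF upos(2) upos(1)] by (simp add: algebra_simps)
      finally show ?thesis using 1 by simp
    qed
    show ?thesis
    proof (cases "x \<le> y")
      case True then show ?thesis using key[of x y] that by (simp add: dist_real_def abs_minus_commute)
    next
      case False then show ?thesis using key[of y x] that by (simp add: dist_real_def abs_minus_commute)
    qed
  qed
  have Lc: "continuous_on {\<epsilon>..2} L"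
  proof (rule lipschitz_on_continuous_on)
    show "(t \<epsilon>)-lipschitz_on {\<epsilon>..2} L"
      by (rule lipschitz_onI) (use lip tpos eps in auto)
  qed
  define F where "F \<theta> = \<theta> * CC (1 + \<theta> - L \<theta>) + B \<theta> - integral {\<epsilon>..\<theta>} f" for \<theta>
  have Fc: "continuous_on {\<epsilon>..2} F" unfolding F_def
    by (intro continuous_intros Lc Bc indefinite_integral_continuous_1 intf)
  have Fd: "\<exists>D\<ge>0. (F has_real_derivative D) (at x)" if x: "x \<in> {\<epsilon><..<2} - S" for x
  proof -
    have xpos: "x > 0" using x eps by auto
    have ct0: "isCont (\<lambda>x. - t x) x" using x xpos by (auto simp: S_def)
    have ct: "isCont t x" using continuous_minus[OF ct0] by simp
    have Ld: "(L has_real_derivative t x) (at x)" by (rule L_deriv[OF sub xpos ct])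
    have Lct: "isCont L x" using DERIV_isCont[OF Ld] .
    define g where "g \<theta> = 1 + \<theta> - L \<theta>" for \<theta>
    have gd: "(g has_real_derivative 1 - t x) (at x)" unfolding g_def
      by (auto intro!: derivative_eq_intros Ld)
    have Cd: "((\<lambda>\<theta>. CC (g \<theta>)) has_real_derivative clip (g x) * (1 - t x)) (at x)"
      by (rule DERIV_chain2[OF CC_deriv gd])
    have Pd: "((\<lambda>\<theta>. \<theta> * CC (g \<theta>)) has_real_derivative CC (g x) + x * (clip (g x) * (1 - t x))) (at x)"
      using DERIV_mult[OF DERIV_ident Cd] by (simp add: mult.commute mult.left_commute)
    have fct: "isCont f x" unfolding f_def by (intro continuous_intros Lct ct)
    have "((\<lambda>u. integral {\<epsilon>..u} f) has_vector_derivative f x) (at x within ({\<epsilon>..2} - {}))"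
      by (rule integral_has_vector_derivative_continuous_at[OF intf])
         (use x fct in \<open>auto intro: continuous_at_imp_continuous_at_within\<close>)
    then have Id: "((\<lambda>u. integral {\<epsilon>..u} f) has_real_derivative f x) (at x)"
      using x by (simp add: at_within_Icc_at has_real_derivative_iff_has_vector_derivative)
    have Bdx: "(B has_real_derivative b x) (at x)" using Bd x by (auto simp: S_def)
    have FD: "(F has_real_derivative (CC (g x) + x * (clip (g x) * (1 - t x)) + b x - f x)) (at x)"
      unfolding F_def using DERIV_diff[OF DERIV_add[OF Pd Bdx] Id] by (simp add: g_def)
    have "CC (g x) + x * (clip (g x) * (1 - t x)) + b x - f x = b x - phi (g x)"
      unfolding f_def phi_def g_def by (simp add: algebra_simps)
    also have "\<dots> \<ge> 0" using bge[of x] x by (simp add: g_def)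
    finally show ?thesis using FD by blast
  qed
  have "F \<epsilon> \<le> F 2" by (rule ctbl_mono[OF eps(2) cS Fc Fd])
  moreover have "integral {\<epsilon>..2} f = integral {\<epsilon>..2} (\<lambda>\<theta>. (L \<theta> - \<theta> * t \<theta>) * clip (1 + \<theta> - L \<theta>))"
    unfolding f_def ..
  ultimately show ?thesis by (simp add: F_def)
qed

lemma CC_nonneg: "CC y \<ge> 0" unfolding CC_def by simp

lemma phi6: "phi g * 6 \<le> 1" using phi_le[of g] by simp

lemma core2:
  fixes t L :: "real \<Rightarrow> real" and \<epsilon> :: real
  assumes tpos: "\<And>\<theta>. \<theta> > 0 \<Longrightarrow> t \<theta> \<ge> 0"
    and sub: "\<And>\<theta> \<theta>'. \<theta> > 0 \<Longrightarrow> \<theta>' > 0 \<Longrightarrow> L \<theta>' \<le> L \<theta> + (\<theta>' - \<theta>) * t \<theta>"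
    and eps: "0 < \<epsilon>" "\<epsilon> \<le> 2/3"
    and int: "(\<lambda>\<theta>. (L \<theta> - \<theta> * t \<theta>) * clip (1 + \<theta> - L \<theta>)) integrable_on {\<epsilon>..2}"
  shows "integral {\<epsilon>..2} (\<lambda>\<theta>. (L \<theta> - \<theta> * t \<theta>) * clip (1 + \<theta> - L \<theta>)) \<le> 44/27"
proof -
  define y where "y = 3 - L 2"
  have gy: "1 + x - L x \<ge> y - 2 + x" if "0 < x" "x \<le> 2" for x
  proof -
    have "L x \<le> L 2 + (x - 2) * t 2" using sub[of 2 x] that by simp
    moreover have "(x - 2) * t 2 \<le> 0" using tpos[of 2] that by (simp add: mult_nonpos_nonneg)
    ultimately show ?thesis by (simp add: y_def)
  qed
  have eps2: "\<epsilon> \<le> 2" using eps by simp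
  have CCe: "\<epsilon> * CC (1 + \<epsilon> - L \<epsilon>) \<ge> 0" using eps CC_nonneg by simp
  show ?thesis
  proof (cases "y < 1")
    case True
    have "integral {\<epsilon>..2} (\<lambda>\<theta>. (L \<theta> - \<theta> * t \<theta>) * clip (1 + \<theta> - L \<theta>))
      \<le> 2 * CC (3 - L 2) - \<epsilon> * CC (1 + \<epsilon> - L \<epsilon>) + 2/6 - \<epsilon>/6"
      by (rule core[OF tpos sub eps(1) eps2 int, of "\<lambda>\<theta>. \<theta>/6" "{}" "\<lambda>_. 1/6"])
         (auto intro!: continuous_intros derivative_eq_intros simp: phi6)
    moreover have "CC (3 - L 2) \<le> 1/2"
    proof -
      have "clip y ^ 2 \<le> 1 ^ 2" unfolding clip_def by (intro power_mono) auto
      then show ?thesis using True unfolding y_def CC_def by simp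
    qed
    ultimately show ?thesis using CCe eps by linarith
  next
    case False
    define d where "d = y - 5/3"
    define P where "P u = u^2/2 - u^3/2 + d * (u - 3/2 * u^2)" for u :: real
    define B where "B \<theta> = min \<theta> (2/3) / 6 + (P (max (2/3) (min \<theta> (4/3)) - 1/3) - P (1/3))
       + ((13/6 - 2 * d) * (max \<theta> (4/3) - 4/3) - ((max \<theta> (4/3))^2 - 16/9))" for \<theta>
    define b where "b \<theta> = (if \<theta> \<le> 2/3 then 1/6 else if \<theta> \<le> 4/3 then
       (\<theta> - 1/3) - 3/2 * (\<theta> - 1/3)^2 + (1 - 3 * (\<theta> - 1/3)) * d else 3/2 - 2 * (\<theta> - 1/3) - 2 * d)" for \<theta>
    have Bc: "continuous_on {\<epsilon>..2} B" unfolding B_def P_def by (auto intro!: continuous_intros)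
    have Bd: "(B has_real_derivative b x) (at x)" if x: "x \<in> {\<epsilon><..<2} - {2/3, 4/3}" for x
    proof -
      consider "x < 2/3" | "2/3 < x" "x < 4/3" | "4/3 < x" using x by force
      then show ?thesis
      proof cases
        case 1
        have "((\<lambda>\<theta>. \<theta> / 6) has_real_derivative b x) (at x)"
          using 1 by (auto intro!: derivative_eq_intros simp: b_def)
        then show ?thesis
          by (rule has_field_derivative_transform_within_open[of _ _ _ "{..<2/3}"])
             (use 1 in \<open>auto simp: B_def power2_eq_square\<close>)
      next
        case 2
        have "((\<lambda>\<theta>. 1/9 + (P (\<theta> - 1/3) - P (1/3))) has_real_derivative b x) (at x)"
          unfolding P_def using 2
          by (auto intro!: derivative_eq_intros simp: b_def field_simps power2_eq_square)
        then show ?thesis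
          by (rule has_field_derivative_transform_within_open[of _ _ _ "{2/3<..<4/3}"])
             (use 2 in \<open>auto simp: B_def power2_eq_square\<close>)
      next
        case 3
        have "((\<lambda>\<theta>. 1/9 + (P 1 - P (1/3)) + ((13/6 - 2 * d) * (\<theta> - 4/3) - (\<theta>^2 - 16/9)))
            has_real_derivative b x) (at x)"
          using 3 by (auto intro!: derivative_eq_intros simp: b_def algebra_simps)
        then show ?thesis
          by (rule has_field_derivative_transform_within_open[of _ _ _ "{4/3<..}"])
             (use 3 in \<open>auto simp: B_def\<close>)
      qed
    qed
    have bge: "phi (1 + x - L x) \<le> b x" if x: "x \<in> {\<epsilon><..<2}" for x
    proof -
      have "y - 2 + x \<le> 1 + x - L x" by (rule gy) (use x eps in auto)
      then have g: "(x - 1/3) + d \<le> 1 + x - L x" by (simp add: d_def)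
      consider "x \<le> 2/3" | "2/3 < x" "x \<le> 4/3" | "4/3 < x" by linarith
      then show ?thesis
      proof cases
        case 1
        have "b x = 1/6" using 1 by (simp add: b_def)
        then show ?thesis using phi_le[of "1 + x - L x"] by linarith
      next
        case 2
        have "phi (1 + x - L x) \<le> (x - 1/3) - 3/2 * (x - 1/3)^2 + (1 - 3 * (x - 1/3)) * d"
          by (rule phi_tan1[OF _ _ g]) (use 2 in auto)
        moreover have "b x = (x - 1/3) - 3/2 * (x - 1/3)^2 + (1 - 3 * (x - 1/3)) * d"
          using 2 unfolding b_def by simp
        ultimately show ?thesis by linarith
      next
        case 3
        have "phi (1 + x - L x) \<le> 3/2 - 2 * (x - 1/3) - 2 * d"
          by (rule phi_tan2[OF _ g]) (use 3 in auto)
        moreover have "b x = 3/2 - 2 * (x - 1/3) - 2 * d"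
          using 3 unfolding b_def by simp
        ultimately show ?thesis by linarith
      qed
    qed
    have fin: "finite {2/3, 4/3::real}" by simp
    have main: "integral {\<epsilon>..2} (\<lambda>\<theta>. (L \<theta> - \<theta> * t \<theta>) * clip (1 + \<theta> - L \<theta>))
      \<le> 2 * CC (3 - L 2) - \<epsilon> * CC (1 + \<epsilon> - L \<epsilon>) + B 2 - B \<epsilon>"
      using core[OF tpos sub eps(1) eps2 int Bc fin Bd bge] .
    have B2: "B 2 = -19/27 - 2 * d" by (simp add: B_def P_def power2_eq_square power3_eq_cube; simp add: field_simps)
    have Be: "B \<epsilon> = \<epsilon> / 6"
    proof -
      have "min \<epsilon> (2/3) = \<epsilon>" "max (2/3) (min \<epsilon> (4/3)) = 2/3" "max \<epsilon> (4/3) = 4/3" using eps by auto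
      then show ?thesis unfolding B_def by (simp add: power2_eq_square)
    qed
    have C2: "CC (3 - L 2) = y - 1/2" using False unfolding y_def CC_def clip_def by simp
    show ?thesis using main B2 Be C2 CCe eps by (simp add: d_def)
  qed
qed

lemma lm_unique:
  assumes "least_minimizer p \<theta> t1" "least_minimizer p \<theta> t2" shows "t1 = t2"
proof -
  have c: False if a: "least_minimizer p \<theta> a" "least_minimizer p \<theta> b" "a < b" for a b
  proof -
    have "0 \<le> a" using a(1) unfolding least_minimizer_def by blast
    then have "p b + \<theta> * b < p a + \<theta> * a" using a(2,3) unfolding least_minimizer_def by blast
    moreover have "0 \<le> b" using a(2) unfolding least_minimizer_def by blast
    then have "p a + \<theta> * a \<le> p b + \<theta> * b" using a(1) unfolding least_minimizer_def by blast
    ultimately show False by linarith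
  qed
  show ?thesis using c[OF assms] c[OF assms(2,1)] by (cases t1 t2 rule: linorder_cases) auto
qed

lemma tstar_lm: "\<exists>t. least_minimizer p \<theta> t \<Longrightarrow> least_minimizer p \<theta> (tstar p \<theta>)"
  unfolding tstar_def by (rule theI') (use lm_unique in blast)

locale wdq =
  fixes q :: "real \<Rightarrow> real"
  assumes wd: "well_defined_scheme q"
begin

definition t where "t \<theta> = tstar q \<theta>"
definition L where "L \<theta> = q (t \<theta>) + \<theta> * t \<theta>"

lemma lm: "\<theta> > 0 \<Longrightarrow> least_minimizer q \<theta> (t \<theta>)"
  using wd unfolding well_defined_scheme_def t_def by (blast intro: tstar_lm)

lemma tpos: "\<theta> > 0 \<Longrightarrow> t \<theta> \<ge> 0" using lm unfolding least_minimizer_def by blast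

lemma sub: "\<theta> > 0 \<Longrightarrow> \<theta>' > 0 \<Longrightarrow> L \<theta>' \<le> L \<theta> + (\<theta>' - \<theta>) * t \<theta>"
proof -
  assume a: "\<theta> > 0" "\<theta>' > 0"
  have "q (t \<theta>') + \<theta>' * t \<theta>' \<le> q (t \<theta>) + \<theta>' * t \<theta>"
    using lm[OF a(2)] tpos[OF a(1)] unfolding least_minimizer_def by blast
  then show ?thesis unfolding L_def by (simp add: algebra_simps)
qed

lemma payment_eq: "\<theta> > 0 \<Longrightarrow> payment q \<theta> v = (if L \<theta> \<le> v then L \<theta> - \<theta> * t \<theta> else 0)"
proof -
  assume "\<theta> > 0"
  then have "\<exists>t. least_minimizer q \<theta> t" using lm by blast
  then show ?thesis unfolding payment_def L_def t_def by simp
qed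

definition h where "h \<theta> = (if 0 < \<theta> \<and> \<theta> \<le> 2 then (L \<theta> - \<theta> * t \<theta>) * clip (1 + \<theta> - L \<theta>) / 2 else 0)"

lemma inner:
  assumes "\<theta> \<noteq> 0"
  shows "(\<integral>v. type_density (\<theta>, v) * payment q \<theta> v \<partial>lborel) = h \<theta>"
proof (cases "0 < \<theta> \<and> \<theta> \<le> 2")
  case True
  define a where "a = max \<theta> (L \<theta>)"
  define c where "c = (L \<theta> - \<theta> * t \<theta>) / 2"
  have td: "type_density (\<theta>, v) = (if \<theta> \<le> v \<and> v \<le> \<theta> + 1 then 1/2 else 0)" for v
    using True unfolding type_density_def type_region_def by auto
  have eq: "type_density (\<theta>, v) * payment q \<theta> v = c * indicator {a..\<theta>+1} v" for v
    unfolding td payment_eq[of \<theta> v, OF conjunct1[OF True]] a_def c_def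
    by (simp add: indicator_def)
  have "(\<integral>v. type_density (\<theta>, v) * payment q \<theta> v \<partial>lborel) = c * measure lborel {a..\<theta>+1}"
    unfolding eq by simp
  also have "\<dots> = h \<theta>"
  proof (cases "a \<le> \<theta> + 1")
    case T: True
    have "clip (1 + \<theta> - L \<theta>) = \<theta> + 1 - a" using T unfolding a_def clip_def by auto
    then show ?thesis using True T unfolding h_def c_def by simp
  next
    case F: False
    have "clip (1 + \<theta> - L \<theta>) = 0" using F unfolding a_def clip_def by auto
    then show ?thesis using True F unfolding h_def c_def by simp
  qed
  finally show ?thesis .
next
  case False
  then have "type_density (\<theta>, v) = 0" for v
    using assms unfolding type_density_def type_region_def by auto
  then show ?thesis using False by (auto simp: h_def)
qed

lemma L_le2: "0 < \<theta> \<Longrightarrow> \<theta> \<le> 2 \<Longrightarrow> L \<theta> \<le> L 2"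
proof -
  assume a: "0 < \<theta>" "\<theta> \<le> 2"
  have "L \<theta> \<le> L 2 + (\<theta> - 2) * t 2" using sub[of 2 \<theta>] a by simp
  moreover have "(\<theta> - 2) * t 2 \<le> 0" using tpos[of 2] a by (simp add: mult_nonpos_nonneg)
  ultimately show ?thesis by simp
qed

lemma h_bound: "h \<theta> \<le> max 0 (L 2) / 2"
proof (cases "0 < \<theta> \<and> \<theta> \<le> 2")
  case True
  define p where "p = L \<theta> - \<theta> * t \<theta>"
  define c where "c = clip (1 + \<theta> - L \<theta>)"
  have c01: "0 \<le> c" "c \<le> 1" unfolding c_def clip_def by auto
  have "\<theta> * t \<theta> \<ge> 0" using True tpos[of \<theta>] by simp
  then have "p \<le> L 2" using L_le2[of \<theta>] True unfolding p_def by linarith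
  have "p * c \<le> max 0 p"
  proof (cases "p \<ge> 0")
    case True then show ?thesis using mult_left_mono[OF c01(2) True] by simp
  next
    case False then show ?thesis using mult_nonpos_nonneg[of p c] c01 by simp
  qed
  also have "\<dots> \<le> max 0 (L 2)" using \<open>p \<le> L 2\<close> by simp
  finally show ?thesis using True unfolding h_def p_def c_def by simp
qed (auto simp: h_def)

lemma revenue_h:
  assumes int: "integrable lborel (\<lambda>x. type_density x * payment q (fst x) (snd x))"
  shows "(h has_integral revenue q) {0..2}"
proof -
  define F where "F x = type_density x * payment q (fst x) (snd x)" for x
  have int2: "integrable (lborel \<Otimes>\<^sub>M lborel) F" using int unfolding F_def by (simp add: lborel_prod)
  have rev: "revenue q = (\<integral>\<theta>. (\<integral>v. F (\<theta>, v) \<partial>lborel) \<partial>lborel)"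
    using lborel_pair.integral_fst'[OF int2] unfolding revenue_def F_def by (simp add: lborel_prod)
  define h0 where "h0 \<theta> = (\<integral>v. F (\<theta>, v) \<partial>lborel)" for \<theta>
  have inth0: "integrable lborel h0" unfolding h0_def by (rule lborel_pair.integrable_fst'[OF int2])
  have "(h0 has_integral (\<integral>\<theta>. h0 \<theta> \<partial>lborel)) UNIV" by (rule has_integral_integral_lborel[OF inth0])
  moreover have "h0 \<theta> = h \<theta>" if "\<theta> \<in> UNIV - {0}" for \<theta>
    using inner[of \<theta>] that unfolding h0_def F_def by simp
  ultimately have hI: "(h has_integral revenue q) UNIV"
    using has_integral_spike_finite_eq[of "{0}" UNIV h h0] rev unfolding h0_def by simp
  have hint: "h integrable_on {0..2}" using hI integrable_on_subinterval by blast
  have "(h has_integral integral {0..2} h) UNIV"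
    by (rule has_integral_on_superset[OF integrable_integral[OF hint]]) (auto simp: h_def)
  then have rq: "revenue q = integral {0..2} h" using hI has_integral_unique by blast
  show ?thesis using rq integrable_integral[OF hint] by simp
qed

lemma revenue_le:
  assumes int: "integrable lborel (\<lambda>x. type_density x * payment q (fst x) (snd x))"
  shows "revenue q \<le> 22/27"
proof -
  have hI: "(h has_integral revenue q) {0..2}" by (rule revenue_h[OF int])
  have hint: "h integrable_on {0..2}" using hI by blast
  have rq: "revenue q = integral {0..2} h" using hI by (simp add: integral_unique)
  define M where "M = max 0 (L 2) / 2"
  have M0: "M \<ge> 0" by (simp add: M_def)
  have bnd: "revenue q \<le> M * \<epsilon> + 22/27" if e: "0 < \<epsilon>" "\<epsilon> \<le> 2/3" for \<epsilon>
  proof -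
    have split: "integral {0..2} h = integral {0..\<epsilon>} h + integral {\<epsilon>..2} h"
      using Henstock_Kurzweil_Integration.integral_combine[where a=0 and c=\<epsilon> and b=2 and f=h] e hint by simp
    have "integral {0..\<epsilon>} h \<le> integral {0..\<epsilon>} (\<lambda>_. M)"
      by (rule integral_le) (use hint e h_bound in \<open>auto simp: M_def intro: integrable_on_subinterval\<close>)
    also have "\<dots> = M * \<epsilon>" using e by simp
    finally have b1: "integral {0..\<epsilon>} h \<le> M * \<epsilon>" .
    define f where "f \<theta> = (L \<theta> - \<theta> * t \<theta>) * clip (1 + \<theta> - L \<theta>)" for \<theta>
    have hf: "2 * h \<theta> = f \<theta>" if "\<theta> \<in> {\<epsilon>..2}" for \<theta> using that e by (simp add: h_def f_def)
    have hint2: "h integrable_on {\<epsilon>..2}" using hint e by (auto intro: integrable_on_subinterval)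
    have fint: "f integrable_on {\<epsilon>..2}"
      using integrable_eq[OF integrable_on_mult_right[OF hint2, where c=2] hf] .
    have "integral {\<epsilon>..2} f \<le> 44/27"
      using core2[OF tpos sub e fint[unfolded f_def]] unfolding f_def by blast
    moreover have "integral {\<epsilon>..2} f = 2 * integral {\<epsilon>..2} h"
    proof -
      have "integral {\<epsilon>..2} (\<lambda>\<theta>. 2 * h \<theta>) = integral {\<epsilon>..2} f"
        by (rule integral_cong) (rule hf)
      then show ?thesis by simp
    qed
    ultimately have b2: "integral {\<epsilon>..2} h \<le> 22/27" by simp
    show ?thesis using rq split b1 b2 by simp
  qed
  show ?thesis
  proof (rule ccontr)
    assume "\<not> revenue q \<le> 22/27"
    then have pos: "revenue q - 22/27 > 0" by simp
    define \<epsilon> where "\<epsilon> = min (2/3) ((revenue q - 22/27) / (2 * (M + 1)))"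
    have qp: "(revenue q - 22/27) / (2 * (M + 1)) > 0" by (intro divide_pos_pos) (use pos M0 in auto)
    have e: "0 < \<epsilon>" "\<epsilon> \<le> 2/3" unfolding \<epsilon>_def using qp by (auto simp: min_def)
    have "M * \<epsilon> \<le> M * ((revenue q - 22/27) / (2 * (M + 1)))"
      using M0 by (intro mult_left_mono) (auto simp: \<epsilon>_def)
    also have "\<dots> < revenue q - 22/27"
    proof -
      have "M / (2 * (M + 1)) < 1" using M0 by (simp add: field_simps)
      then have "(revenue q - 22/27) * (M / (2 * (M + 1))) < (revenue q - 22/27) * 1"
        using pos by (intro mult_strict_left_mono) auto
      moreover have "M * ((revenue q - 22/27) / (2 * (M + 1))) = (revenue q - 22/27) * (M / (2 * (M + 1)))"
        by simp
      ultimately show ?thesis by (simp only:) simp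
    qed
    finally show False using bnd[OF e] by simp
  qed
qed

end

definition topt :: "real \<Rightarrow> real" where "topt \<theta> = (if \<theta> < 2/3 then 1 else 0)"

lemma popt_lm: assumes "\<theta> \<ge> 0" shows "least_minimizer p_opt \<theta> (topt \<theta>)"
proof (cases "\<theta> < 2/3")
  case True
  have "p_opt 1 + \<theta> * 1 \<le> p_opt s + \<theta> * s" if "s \<ge> 0" for s
  proof (cases "s < 1")
    case True
    have "p_opt s = 4/3" "p_opt 1 = 2/3" using True by (simp_all add: p_opt_def)
    then show ?thesis using \<open>\<theta> < 2/3\<close> mult_nonneg_nonneg[OF assms that] by linarith
  next
    case False
    have "\<theta> * 1 \<le> \<theta> * s" using False assms by (intro mult_left_mono) auto
    then show ?thesis using False by (simp add: p_opt_def)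
  qed
  moreover have "p_opt 1 + \<theta> * 1 < p_opt s + \<theta> * s" if "0 \<le> s" "s < 1" for s
  proof -
    have "p_opt s = 4/3" "p_opt 1 = 2/3" using that by (simp_all add: p_opt_def)
    then show ?thesis using \<open>\<theta> < 2/3\<close> mult_nonneg_nonneg[OF assms that(1)] by linarith
  qed
  ultimately show ?thesis using True unfolding least_minimizer_def topt_def by simp
next
  case False
  have "p_opt 0 + \<theta> * 0 \<le> p_opt s + \<theta> * s" if "s \<ge> 0" for s
  proof (cases "s < 1")
    case True
    have "p_opt s = 4/3" "p_opt 0 = 4/3" using True by (simp_all add: p_opt_def)
    then show ?thesis using mult_nonneg_nonneg[OF assms that] by linarith
  next
    case F: False
    have "\<theta> * 1 \<le> \<theta> * s" using F assms by (intro mult_left_mono) auto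
    moreover have "p_opt s = 2/3" "p_opt 0 = 4/3" using F by (simp_all add: p_opt_def)
    ultimately show ?thesis using False by linarith
  qed
  then show ?thesis using False unfolding least_minimizer_def topt_def by simp
qed

lemma popt_ps: "pricing_scheme p_opt" unfolding pricing_scheme_def p_opt_def by auto

lemma popt_wd: "well_defined_scheme p_opt"
  unfolding well_defined_scheme_def using popt_lm by (meson less_imp_le)

lemma popt_tstar: "\<theta> \<ge> 0 \<Longrightarrow> tstar p_opt \<theta> = topt \<theta>"
  using popt_lm tstar_lm lm_unique by blast

lemma popt_sep: "\<theta> \<ge> 0 \<Longrightarrow> separation p_opt \<theta> = (if \<theta> \<le> 2/3 then 2/3 + \<theta> else 4/3)"
proof -
  assume th: "\<theta> \<ge> 0"
  have lm: "least_minimizer p_opt \<theta> (topt \<theta>)" by (rule popt_lm[OF th])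
  have "separation p_opt \<theta> = p_opt (topt \<theta>) + \<theta> * topt \<theta>"
    unfolding separation_def
  proof (rule cInf_eq_minimum)
    show "p_opt (topt \<theta>) + \<theta> * topt \<theta> \<in> (\<lambda>t. p_opt t + \<theta> * t) ` {0..}"
      using lm unfolding least_minimizer_def by auto
    show "\<And>x. x \<in> (\<lambda>t. p_opt t + \<theta> * t) ` {0..} \<Longrightarrow> p_opt (topt \<theta>) + \<theta> * topt \<theta> \<le> x"
      using lm unfolding least_minimizer_def by auto
  qed
  also have "\<dots> = (if \<theta> \<le> 2/3 then 2/3 + \<theta> else 4/3)"
    by (auto simp: topt_def p_opt_def)
  finally show ?thesis .
qed

interpretation P: wdq p_opt by unfold_locales (rule popt_wd)

lemma popt_pay: "\<theta> \<ge> 0 \<Longrightarrow> payment p_opt \<theta> v =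
   (if \<theta> < 2/3 then (if 2/3 + \<theta> \<le> v then 2/3 else 0) else (if 4/3 \<le> v then 4/3 else 0))"
proof -
  assume th: "\<theta> \<ge> 0"
  have ex: "\<exists>t. least_minimizer p_opt \<theta> t" using popt_lm[OF th] by blast
  show ?thesis unfolding payment_def popt_tstar[OF th] using ex
    by (auto simp: topt_def p_opt_def)
qed

definition Pe :: "real \<times> real \<Rightarrow> real" where
  "Pe x = (if fst x < 2/3 then (if 2/3 + fst x \<le> snd x then 2/3 else 0) else (if 4/3 \<le> snd x then 4/3 else 0))"

lemma type_region_alt: "type_region = {x. fst x \<le> snd x \<and> snd x - fst x \<le> 1 \<and> 0 \<le> fst x \<and> fst x \<le> 2}"
  unfolding type_region_def by auto

lemma type_region_sets [measurable]: "type_region \<in> sets borel"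
proof -
  have "closed type_region" unfolding type_region_alt
    by (intro closed_Collect_conj closed_Collect_le continuous_intros)
  then show ?thesis by (rule borel_closed)
qed

lemma F_eq: "type_density x * payment p_opt (fst x) (snd x) = type_density x * Pe x"
proof (cases "fst x \<ge> 0")
  case True then show ?thesis using popt_pay[OF True, of "snd x"] by (simp add: Pe_def)
next
  case False then have "type_density x = 0" unfolding type_density_def type_region_def by (cases x) auto
  then show ?thesis by simp
qed

lemma popt_int: "integrable lborel (\<lambda>x. type_density x * payment p_opt (fst x) (snd x))"
proof -
  let ?B = "cbox (0::real, 0::real) (2, 3)"
  have ib: "integrable lborel (\<lambda>x. 2/3 * indicator ?B x :: real)"
    by (intro integrable_mult_right integrable_real_indicator emeasure_lborel_cbox_finite) simp
  have [measurable]: "type_region \<in> sets (lborel \<Otimes>\<^sub>M lborel)"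
    unfolding lborel_prod by simp
  have "(\<lambda>x. type_density x * Pe x) \<in> borel_measurable (lborel \<Otimes>\<^sub>M lborel)"
    unfolding type_density_def Pe_def by measurable
  then have meas: "(\<lambda>x. type_density x * Pe x) \<in> borel_measurable lborel"
    unfolding lborel_prod .
  have bnd: "norm (type_density x * Pe x) \<le> norm (2/3 * indicator ?B x :: real)" for x
  proof (cases "x \<in> type_region")
    case True
    then have "x \<in> ?B" unfolding type_region_def by (cases x) (auto simp: cbox_Pair_eq)
    moreover have "\<bar>Pe x\<bar> \<le> 4/3" unfolding Pe_def by auto
    ultimately show ?thesis using True by (simp add: type_density_def)
  next
    case False then show ?thesis by (simp add: type_density_def)
  qed
  have "integrable lborel (\<lambda>x. type_density x * Pe x)"
    by (rule Bochner_Integration.integrable_bound[OF ib meas]) (use bnd in auto)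
  then show ?thesis by (simp add: F_eq)
qed

definition gopt :: "real \<Rightarrow> real" where
  "gopt \<theta> = (if \<theta> < 2/3 then 1/9 else 2/3 * min 1 (\<theta> - 1/3))"

lemma popt_h: "0 < \<theta> \<Longrightarrow> \<theta> \<le> 2 \<Longrightarrow> P.h \<theta> = gopt \<theta>"
proof -
  assume th: "0 < \<theta>" "\<theta> \<le> 2"
  have t: "P.t \<theta> = topt \<theta>" unfolding P.t_def using popt_tstar th by simp
  show ?thesis
  proof (cases "\<theta> < 2/3")
    case True
    have "P.L \<theta> = 2/3 + \<theta>" unfolding P.L_def t using True by (simp add: topt_def p_opt_def)
    moreover have "clip (1/3) = 1/3" by (simp add: clip_def)
    ultimately show ?thesis unfolding P.h_def gopt_def t using True th by (simp add: topt_def)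
  next
    case False
    have L: "P.L \<theta> = 4/3" unfolding P.L_def t using False by (simp add: topt_def p_opt_def)
    have c: "clip (1 + \<theta> - 4/3) = min 1 (\<theta> - 1/3)" using False by (simp add: clip_def)
    show ?thesis unfolding P.h_def gopt_def t L c using False th by (simp add: topt_def)
  qed
qed

definition Gi :: "real \<Rightarrow> real" where
  "Gi \<theta> = min \<theta> (2/3) / 9 + 1/3 * ((max (2/3) (min \<theta> (4/3)) - 1/3)^2 - 1/9) + 2/3 * (max \<theta> (4/3) - 4/3)"

lemma gopt_int: "(gopt has_integral 22/27) {0..2}"
proof -
  have "(gopt has_integral (Gi 2 - Gi 0)) {0..2}"
  proof (rule fundamental_theorem_of_calculus_interior_strong[of "{2/3, 4/3}"])
    show "continuous_on {0..2} Gi" unfolding Gi_def by (auto intro!: continuous_intros)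
    fix x :: real assume x: "x \<in> {0<..<2} - {2/3, 4/3}"
    consider "x < 2/3" | "2/3 < x" "x < 4/3" | "4/3 < x" using x by force
    then have "(Gi has_real_derivative gopt x) (at x)"
    proof cases
      case 1
      have "((\<lambda>\<theta>. \<theta> / 9) has_real_derivative gopt x) (at x)"
        using 1 by (auto intro!: derivative_eq_intros simp: gopt_def)
      then show ?thesis
        by (rule has_field_derivative_transform_within_open[of _ _ _ "{..<2/3}"])
           (use 1 in \<open>auto simp: Gi_def power2_eq_square\<close>)
    next
      case 2
      have "((\<lambda>\<theta>. 2/27 + 1/3 * ((\<theta> - 1/3)^2 - 1/9)) has_real_derivative gopt x) (at x)"
        using 2 by (auto intro!: derivative_eq_intros simp: gopt_def field_simps)
      then show ?thesis
        by (rule has_field_derivative_transform_within_open[of _ _ _ "{2/3<..<4/3}"])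
           (use 2 in \<open>auto simp: Gi_def power2_eq_square\<close>)
    next
      case 3
      have "((\<lambda>\<theta>. 2/27 + 8/27 + 2/3 * (\<theta> - 4/3)) has_real_derivative gopt x) (at x)"
        using 3 by (auto intro!: derivative_eq_intros simp: gopt_def)
      then show ?thesis
        by (rule has_field_derivative_transform_within_open[of _ _ _ "{4/3<..}"])
           (use 3 in \<open>auto simp: Gi_def power2_eq_square\<close>)
    qed
    then show "(Gi has_vector_derivative gopt x) (at x)"
      by (simp add: has_real_derivative_iff_has_vector_derivative)
  qed auto
  moreover have "Gi 2 - Gi 0 = 22/27" by (simp add: Gi_def power2_eq_square)
  ultimately show ?thesis by simp
qed

lemma popt_rev: "revenue p_opt = 22/27"
proof -
  have hI: "(P.h has_integral revenue p_opt) {0..2}" by (rule P.revenue_h[OF popt_int])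
  have "(P.h has_integral 22/27) {0..2}"
    using has_integral_spike_finite_eq[of "{0}" "{0..2}" P.h gopt] gopt_int popt_h by force
  then show ?thesis using hI has_integral_unique by blast
qed

theorem theorem5:
  shows "pricing_scheme p_opt \<and> well_defined_scheme p_opt
    \<and> (\<forall>q. pricing_scheme q \<and> well_defined_scheme q \<longrightarrow> revenue q \<le> revenue p_opt)
    \<and> (\<forall>\<theta>\<ge>0. separation p_opt \<theta> = (if \<theta> \<le> 2/3 then 2/3 + \<theta> else 4/3))"
proof -
  have rev: "\<forall>q. pricing_scheme q \<and> well_defined_scheme q \<longrightarrow> revenue q \<le> revenue p_opt"
  proof (intro allI impI)
    fix q assume a: "pricing_scheme q \<and> well_defined_scheme q"
    then interpret Q: wdq q by unfold_locales blast
    show "revenue q \<le> revenue p_opt"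
    proof (cases "integrable lborel (\<lambda>x. type_density x * payment q (fst x) (snd x))")
      case True then show ?thesis using Q.revenue_le popt_rev by simp
    next
      case False
      then have "revenue q = 0" unfolding revenue_def by (simp add: not_integrable_integral_eq)
      then show ?thesis using popt_rev by simp
    qed
  qed
  show ?thesis using popt_ps popt_wd rev popt_sep by blast
qed

end
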